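(* If a locally convex space $E$ has a countable radial network, then every uncountable subset of $E$ contains an infinite bounded subset.
   Context: A family $\mathcal N$ of subsets of a topological vector space $E$ is a radial network if for every neighborhood $U$ of zero and every $x\in E$ there exist $N\in\mathcal N$ and a nonzero real $\varepsilon$ with $\varepsilon x\in N\subseteq U$. A set $B$ is bounded if for every neighborhood $U$ of zero there is $n\in\mathbb N$ with $B\subseteq nU$. *)

theory Defs
  imports "HOL-Analysis.Analysis"
begin

definition tvs :: "'a::{real_vector, topological_space} itself \<Rightarrow> bool" where
  "tvs _ \<longleftrightarrow>
     continuous_on UNIV (\<lambda>(x::'a, y::'a). x + y) \<and>
     continuous_on UNIV (\<lambda>(c::real, x::'a). c *\<^sub>R x)"

definition nhd0 :: "'a::{real_vector, topological_space} set \<Rightarrow> bool" where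
  "nhd0 U \<longleftrightarrow> (\<exists>V. open V \<and> 0 \<in> V \<and> V \<subseteq> U)"

definition locally_convex_tvs :: "'a::{real_vector, topological_space} itself \<Rightarrow> bool" where
  "locally_convex_tvs T \<longleftrightarrow> tvs T \<and>
     (\<forall>U::'a set. nhd0 U \<longrightarrow> (\<exists>V. nhd0 V \<and> convex V \<and> V \<subseteq> U))"

definition radial_network :: "'a::{real_vector, topological_space} set set \<Rightarrow> bool" where
  "radial_network \<N> \<longleftrightarrow>
     (\<forall>U x. nhd0 U \<longrightarrow> (\<exists>N\<in>\<N>. \<exists>\<epsilon>::real. \<epsilon> \<noteq> 0 \<and> \<epsilon> *\<^sub>R x \<in> N \<and> N \<subseteq> U))"

definition tvs_bounded :: "'a::{real_vector, topological_space} set \<Rightarrow> bool" where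
  "tvs_bounded B \<longleftrightarrow>
     (\<forall>U. nhd0 U \<longrightarrow> (\<exists>n::nat. B \<subseteq> (\<lambda>x. real n *\<^sub>R x) ` U))"

end

theory Submission
  imports Defs
begin

definition TT :: "'a::real_vector set \<Rightarrow> nat \<Rightarrow> 'a set" where
  "TT N m = {x. \<exists>z\<in>N. \<exists>t. \<bar>t\<bar> \<le> real m \<and> x = t *\<^sub>R z}"

lemma bal:
  fixes W :: "'a::real_vector set"
  assumes "convex W" "\<forall>x\<in>W. - x \<in> W" "0 \<in> W" "z \<in> W" "\<bar>s\<bar> \<le> 1"
  shows "s *\<^sub>R z \<in> W"
proof (cases "s \<ge> 0")
  case True
  have "s *\<^sub>R z + (1 - s) *\<^sub>R 0 \<in> W"
    using assms True by (intro convexD) auto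
  then show ?thesis by simp
next
  case False
  have "(-s) *\<^sub>R (-z) + (1 + s) *\<^sub>R 0 \<in> W"
    using assms False by (intro convexD) auto
  then show ?thesis by simp
qed

lemma scale_mono:
  fixes W :: "'a::real_vector set"
  assumes "convex W" "\<forall>x\<in>W. - x \<in> W" "0 \<in> W"
    and "x \<in> (\<lambda>x. real n *\<^sub>R x) ` W" "0 < n" "n \<le> n'"
  shows "x \<in> (\<lambda>x. real n' *\<^sub>R x) ` W"
proof -
  obtain u where u: "u \<in> W" "x = real n *\<^sub>R u" using assms(4) by auto
  have "(real n / real n') *\<^sub>R u \<in> W"
    using assms u by (intro bal) auto
  moreover have "x = real n' *\<^sub>R ((real n / real n') *\<^sub>R u)"
    using u assms by auto
  ultimately show ?thesis by blast
qed

lemma TT_sub: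
  fixes W :: "'a::real_vector set"
  assumes "convex W" "\<forall>x\<in>W. - x \<in> W" "0 \<in> W" "N \<subseteq> W" "m \<ge> 1"
  shows "TT N m \<subseteq> (\<lambda>x. real m *\<^sub>R x) ` W"
proof
  fix x assume "x \<in> TT N m"
  then obtain z t where zt: "z \<in> N" "\<bar>t\<bar> \<le> real m" "x = t *\<^sub>R z"
    unfolding TT_def by blast
  have m0: "real m > 0" using assms(5) by simp
  have "\<bar>t / real m\<bar> \<le> 1" using zt(2) m0 by (simp add: abs_divide divide_le_eq_1)
  moreover have "z \<in> W" using zt(1) assms(4) by blast
  ultimately have mem: "(t / real m) *\<^sub>R z \<in> W"
    using bal[OF assms(1-3)] by blast
  have eq: "x = real m *\<^sub>R ((t / real m) *\<^sub>R z)"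
    using zt(3) m0 by simp
  show "x \<in> (\<lambda>x. real m *\<^sub>R x) ` W" using image_eqI[of x "\<lambda>x. real m *\<^sub>R x", OF eq mem] .
qed

lemma TT_in:
  fixes y :: "'a::real_vector"
  assumes "\<epsilon> \<noteq> 0" "\<epsilon> *\<^sub>R y \<in> N" "1 / \<bar>\<epsilon>\<bar> \<le> real m"
  shows "y \<in> TT N m"
  unfolding TT_def
proof (intro CollectI bexI exI conjI)
  show "\<bar>1/\<epsilon>\<bar> \<le> real m" using assms by simp
  show "y = (1/\<epsilon>) *\<^sub>R (\<epsilon> *\<^sub>R y)" using assms by simp
qed (use assms in auto)

lemma sym_nhd:
  assumes "locally_convex_tvs TYPE('a::{real_vector, topological_space})"
    and "nhd0 (U::'a set)"
  shows "\<exists>W. nhd0 W \<and> convex W \<and> (\<forall>x\<in>W. - x \<in> W) \<and> 0 \<in> W \<and> W \<subseteq> U"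
proof -
  obtain V where V: "nhd0 V" "convex V" "V \<subseteq> U"
    using assms unfolding locally_convex_tvs_def by blast
  obtain Q where Q: "open Q" "0 \<in> Q" "Q \<subseteq> V" using V unfolding nhd0_def by blast
  have c: "continuous_on UNIV (\<lambda>(c::real, x::'a). c *\<^sub>R x)"
    using assms unfolding locally_convex_tvs_def tvs_def by blast
  have c2: "continuous_on UNIV (\<lambda>x::'a. (-1::real, x))"
    by (intro continuous_on_Pair continuous_on_const continuous_on_id)
  have "continuous_on UNIV ((\<lambda>(c::real, x::'a). c *\<^sub>R x) \<circ> (\<lambda>x::'a. (-1::real, x)))"
    by (rule continuous_on_compose[OF c2]) (rule continuous_on_subset[OF c], simp)
  then have "continuous_on UNIV (\<lambda>x::'a. - x)" by (simp add: o_def)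
  then have "open ((\<lambda>x::'a. - x) -` Q \<inter> UNIV)"
    using Q(1) continuous_on_open_vimage[of UNIV "\<lambda>x::'a. - x"] by blast
  then have oo: "open (Q \<inter> (\<lambda>x::'a. - x) -` Q)" using Q(1) by (simp add: open_Int)
  define W where "W = V \<inter> (\<lambda>x. - x) -` V"
  have "Q \<inter> (\<lambda>x::'a. - x) -` Q \<subseteq> W" using Q(3) unfolding W_def by blast
  moreover have "0 \<in> Q \<inter> (\<lambda>x::'a. - x) -` Q" using Q(2) by simp
  ultimately have "nhd0 W" unfolding nhd0_def using oo by blast
  moreover have "convex ((\<lambda>x::'a. - x) -` V)"
    by (rule convex_linear_vimage[OF linear_uminus V(2)])
  then have "convex W" unfolding W_def using V(2) by (rule convex_Int[rotated])
  moreover have "0 \<in> W" using Q unfolding W_def by auto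
  moreover have "\<forall>x\<in>W. - x \<in> W" unfolding W_def by simp
  moreover have "W \<subseteq> U" unfolding W_def using V(3) by blast
  ultimately show ?thesis by blast
qed

lemma finite_bd:
  fixes W :: "'a::real_vector set"
  assumes "convex W" "\<forall>x\<in>W. - x \<in> W" "0 \<in> W"
    and pt: "\<And>x. \<exists>n>0. x \<in> (\<lambda>x. real n *\<^sub>R x) ` W"
    and "finite F"
  shows "\<exists>n>0. F \<subseteq> (\<lambda>x. real n *\<^sub>R x) ` W"
  using assms(5)
proof (induction F rule: finite_induct)
  case empty then show ?case by (intro exI[of _ 1]) auto
next
  case (insert x F)
  obtain n where n: "n > 0" "F \<subseteq> (\<lambda>x. real n *\<^sub>R x) ` W" using insert by blast
  obtain k where k: "k > 0" "x \<in> (\<lambda>x. real k *\<^sub>R x) ` W" using pt by blast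
  have "x \<in> (\<lambda>x. real (max n k) *\<^sub>R x) ` W"
    using scale_mono[OF assms(1-3) k(2) k(1), of "max n k"] by simp
  moreover have "F \<subseteq> (\<lambda>x. real (max n k) *\<^sub>R x) ` W"
  proof
    fix z assume "z \<in> F"
    then have "z \<in> (\<lambda>x. real n *\<^sub>R x) ` W" using n by blast
    from scale_mono[OF assms(1-3) this n(1), of "max n k"] show "z \<in> (\<lambda>x. real (max n k) *\<^sub>R x) ` W" by simp
  qed
  ultimately have "insert x F \<subseteq> (\<lambda>x. real (max n k) *\<^sub>R x) ` W" by blast
  then show ?case using n by (intro exI[of _ "max n k"]) auto
qed

theorem theorem5p1:
  fixes \<N> :: "'a::{real_vector, topological_space} set set" and A :: "'a set"
  assumes "locally_convex_tvs TYPE('a)"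
    and "countable \<N>" and "radial_network \<N>"
    and "uncountable A"
  shows "\<exists>B\<subseteq>A. infinite B \<and> tvs_bounded B"
proof -
  note lc = assms(1)
  have radW: "\<exists>N\<in>\<N>. \<exists>m>0. N \<subseteq> W \<and> y \<in> TT N m" if "nhd0 W" for W y
  proof -
    obtain N \<epsilon> where N: "N \<in> \<N>" "\<epsilon> \<noteq> 0" "\<epsilon> *\<^sub>R y \<in> N" "N \<subseteq> W"
      using assms(3) \<open>nhd0 W\<close> unfolding radial_network_def by blast
    define m where "m = nat \<lceil>1 / \<bar>\<epsilon>\<bar>\<rceil> + 1"
    have "1 / \<bar>\<epsilon>\<bar> \<le> real m" unfolding m_def by linarith
    then have "y \<in> TT N m" using N by (intro TT_in) auto
    then show ?thesis using N by (intro bexI[of _ N] exI[of _ m]) (auto simp: m_def)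
  qed
  define S where "S = (\<lambda>(N, m). TT N m) ` (\<N> \<times> (UNIV :: nat set))"
  have cS: "countable S" unfolding S_def using assms(2) by auto
  define FF where "FF = {F. finite F \<and> F \<subseteq> S}"
  have cFF: "countable FF" unfolding FF_def using cS by (rule countable_Collect_finite_subset)
  define C where "C = (\<Union>F\<in>{F \<in> FF. countable (A \<inter> \<Inter>F)}. A \<inter> \<Inter>F)"
  have "countable C" unfolding C_def
    by (rule countable_UN) (use cFF in auto)
  then have "A - C \<noteq> {}" using assms(4)
    by (metis Diff_eq_empty_iff countable_subset)
  then obtain y where y: "y \<in> A" "y \<notin> C" by blast
  define Sy where "Sy = {T \<in> S. y \<in> T}"
  have nhdU: "nhd0 (UNIV :: 'a set)" unfolding nhd0_def by auto
  have "Sy \<noteq> {}"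
    using radW[OF nhdU, of y] unfolding Sy_def S_def by blast
  have cSy: "countable Sy" using cS unfolding Sy_def by auto
  define s where "s = from_nat_into Sy"
  have rs: "range s = Sy" unfolding s_def using \<open>Sy \<noteq> {}\<close> cSy by simp
  define G where "G = (\<lambda>j. A \<inter> \<Inter>(s ` {..j}))"
  have Gunc: "uncountable (G j)" for j
  proof
    assume "countable (G j)"
    moreover have "s ` {..j} \<in> FF" unfolding FF_def using rs unfolding Sy_def by auto
    ultimately have "G j \<subseteq> C" unfolding C_def G_def by blast
    moreover have "y \<in> G j" unfolding G_def using y rs unfolding Sy_def by auto
    ultimately show False using y by blast
  qed
  have Gmono: "G j \<subseteq> G i" if "i \<le> j" for i j
    unfolding G_def using that by auto
  have "\<forall>j F. \<exists>x. finite F \<longrightarrow> x \<in> G j - F"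
  proof (intro allI)
    fix j F
    show "\<exists>x. finite F \<longrightarrow> x \<in> G j - F"
    proof (cases "finite F")
      case True
      then have "G j - F \<noteq> {}"
        using Gunc[of j] by (metis Diff_eq_empty_iff countable_finite countable_subset)
      then show ?thesis by blast
    qed auto
  qed
  then obtain g where g: "\<And>j F. finite F \<Longrightarrow> g j F \<in> G j - F" by metis
  define P where "P = rec_nat {} (\<lambda>j Pj. insert (g j Pj) Pj)"
  have P0: "P 0 = {}" and PS: "P (Suc j) = insert (g j (P j)) (P j)" for j
    unfolding P_def by simp_all
  have Pfin: "finite (P j)" for j by (induction j) (auto simp: P0 PS)
  have Pcard: "card (P j) = j" for j
  proof (induction j)
    case (Suc j)
    have "g j (P j) \<notin> P j" using g[OF Pfin[of j], of j] by blast
    then show ?case using Suc by (simp add: PS Pfin)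
  qed (simp add: P0)
  define B where "B = (\<Union>j. P j)"
  have PA: "P j \<subseteq> A" for j
  proof (induction j)
    case (Suc j)
    have "g j (P j) \<in> A" using g[OF Pfin[of j], of j] unfolding G_def by blast
    then show ?case using Suc by (simp add: PS)
  qed (simp add: P0)
  have PG: "P j \<subseteq> P i \<union> G i" for i j
  proof (induction j)
    case 0 then show ?case by (simp add: P0)
  next
    case (Suc j)
    have "g j (P j) \<in> P i \<union> G i"
    proof (cases "i \<le> j")
      case True
      then show ?thesis using g[OF Pfin, of j j] Gmono[OF True] by auto
    next
      case False
      then have "Suc j \<le> i" by simp
      then have "P (Suc j) \<subseteq> P i"
        by (induction rule: dec_induct) (auto simp: PS)
      then show ?thesis by (auto simp: PS)
    qed
    then show ?case using Suc by (auto simp: PS)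
  qed
  have "B \<subseteq> A" unfolding B_def using PA by auto
  moreover have "infinite B"
  proof
    assume "finite B"
    have "card (P (Suc (card B))) \<le> card B"
      by (rule card_mono[OF \<open>finite B\<close>]) (auto simp: B_def)
    then show False using Pcard by simp
  qed
  moreover have "tvs_bounded B"
    unfolding tvs_bounded_def
  proof (intro allI impI)
    fix U :: "'a set" assume "nhd0 U"
    then obtain W where W: "nhd0 W" "convex W" "\<forall>x\<in>W. - x \<in> W" "0 \<in> W" "W \<subseteq> U"
      using sym_nhd[OF lc] by blast
    have pt: "\<exists>n>0. x \<in> (\<lambda>x. real n *\<^sub>R x) ` W" for x
    proof -
      obtain N m where "N \<in> \<N>" "m > 0" "N \<subseteq> W" "x \<in> TT N m" using radW[OF W(1)] by blast
      then show ?thesis using TT_sub[OF W(2-4), of N m] by (intro exI[of _ m]) auto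
    qed
    obtain N m where Nm: "N \<in> \<N>" "m > 0" "N \<subseteq> W" "y \<in> TT N m" using radW[OF W(1)] by blast
    then have "TT N m \<in> Sy" unfolding Sy_def S_def by auto
    then obtain i where i: "s i = TT N m" using rs by (metis rangeE)
    have "G i \<subseteq> TT N m" unfolding G_def using i by auto
    then have BPT: "B \<subseteq> P i \<union> TT N m" unfolding B_def using PG[of _ i] by blast
    obtain k where k: "k > 0" "P i \<subseteq> (\<lambda>x. real k *\<^sub>R x) ` W"
      using finite_bd[OF W(2-4) pt Pfin] by blast
    have T: "TT N m \<subseteq> (\<lambda>x. real m *\<^sub>R x) ` W" using TT_sub[OF W(2-4) Nm(3)] Nm by auto
    have "B \<subseteq> (\<lambda>x. real (max k m) *\<^sub>R x) ` W"
    proof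
      fix x assume "x \<in> B"
      then have "x \<in> P i \<or> x \<in> TT N m" using BPT by auto
      then show "x \<in> (\<lambda>x. real (max k m) *\<^sub>R x) ` W"
      proof
        assume "x \<in> P i"
        then have "x \<in> (\<lambda>x. real k *\<^sub>R x) ` W" using k by blast
        from scale_mono[OF W(2-4) this k(1), of "max k m"] show ?thesis by simp
      next
        assume "x \<in> TT N m"
        then have "x \<in> (\<lambda>x. real m *\<^sub>R x) ` W" using T by blast
        from scale_mono[OF W(2-4) this Nm(2), of "max k m"] show ?thesis by simp
      qed
    qed
    then show "\<exists>n. B \<subseteq> (\<lambda>x. real n *\<^sub>R x) ` U" using W(5) by blast
  qed
  ultimately show ?thesis by blast
qed

end
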